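(* Let $d_0<d_1<\cdots$ be the increasing enumeration of $\{m\ge1:\ c_m=0\}$ and $z_n=\left(\frac{d_{4n}+1}{4}-n\right)\bmod 2$ for $n\ge0$. Then for every integer $m\ge2$ and every integer $n\in\left[2^{2m},\frac43\,2^{2m}\right]$ we have $z_n=0$.
   Context: For $n\in\mathbb{N}$ let $s_2(n)$ be the sum of the binary digits of $n$ and $t_n=s_2(n)\bmod 2$ (the Prouhet–Thue–Morse sequence). Let $F(X)=\sum_{n\ge1}t_nX^n\in\mathbb{F}_2[[X]]$ and let $G(X)=\sum_{n\ge1}c_nX^n\in\mathbb{F}_2[[X]]$ be its compositional inverse, i.e. $F(G(X))=G(F(X))=X$. The $c_n$ are identified with integers in $\{0,1\}$. The sequence $(d_n)$ is indexed from $0$, so $d_0=3$, and $\frac{d_{4n}+1}{4}$ is always an integer. *)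

theory Defs
  imports "HOL-Computational_Algebra.Formal_Power_Series" "HOL-Library.Z2" "HOL-Library.Infinite_Set"
begin

fun s2 :: "nat \<Rightarrow> nat" where
  "s2 n = (if n = 0 then 0 else n mod 2 + s2 (n div 2))"

definition tm :: "nat \<Rightarrow> bit" where
  "tm n = of_nat (s2 n mod 2)"

definition F_tm :: "bit fps" where
  "F_tm = Abs_fps (\<lambda>n. if n = 0 then 0 else tm n)"

definition G_tm :: "bit fps" where
  "G_tm = fps_inv F_tm"

definition c_tm :: "nat \<Rightarrow> bit" where
  "c_tm n = fps_nth G_tm n"

definition d_tm :: "nat \<Rightarrow> nat" where
  "d_tm k = enumerate {m. m \<ge> 1 \<and> c_tm m = 0} k"

definition z_tm :: "nat \<Rightarrow> int" where
  "z_tm n = (int ((d_tm (4*n) + 1) div 4) - int n) mod 2"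

end

theory Submission
  imports Defs
begin

unbundle fps_syntax
declare add_bit_eq_xor[simp del] mult_bit_eq_and[simp del]



lemma bit_add_self [simp]: "(x::bit) + x = 0"
  by (cases x) auto

lemma bit_mult_self [simp]: "(x::bit) * x = x"
  by (cases x) auto

lemma frob_nth:
  fixes A :: "bit fps"
  shows "(A*A)$n = (if even n then A$(n div 2) else 0)"
proof -
  define g where "g i = A$i * A$(n-i)" for i
  define L where "L = {i. 2*i < n}"
  define R where "R = {i. n < 2*i \<and> i \<le> n}"
  define Mi where "Mi = {i. 2*i = n}"
  have fin: "finite L" "finite R" "finite Mi" unfolding L_def R_def Mi_def by (auto intro: finite_subset[of _ "{..n}"])
  have split: "{0..n} = L \<union> Mi \<union> R" unfolding L_def R_def Mi_def by auto
  have "(A*A)$n = sum g {0..n}" by (simp add: fps_mult_nth g_def)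
  also have "\<dots> = sum g L + sum g Mi + sum g R"
  proof -
    have "sum g (L \<union> Mi \<union> R) = sum g (L \<union> Mi) + sum g R"
      by (rule sum.union_disjoint) (use fin in \<open>auto simp: L_def R_def Mi_def\<close>)
    moreover have "sum g (L \<union> Mi) = sum g L + sum g Mi"
      by (rule sum.union_disjoint) (use fin in \<open>auto simp: L_def R_def Mi_def\<close>)
    ultimately show ?thesis unfolding split by simp
  qed
  also have "sum g R = sum g L"
  proof -
    have "R = (\<lambda>i. n - i) ` L"
    proof (rule set_eqI, rule iffI)
      fix x assume "x \<in> R" then show "x \<in> (\<lambda>i. n - i) ` L"
        unfolding L_def R_def by (intro image_eqI[of _ _ "n - x"]) auto
    qed (auto simp: L_def R_def)
    moreover have "inj_on (\<lambda>i. n - i) L" unfolding L_def inj_on_def by auto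
    ultimately have "sum g R = sum (g \<circ> (\<lambda>i. n - i)) L" by (simp add: sum.reindex)
    also have "\<dots> = sum g L" unfolding L_def
      by (rule sum.cong) (auto simp: g_def mult.commute)
    finally show ?thesis .
  qed
  also have "sum g Mi = (if even n then A$(n div 2) else 0)"
  proof (cases "even n")
    case True
    then have "Mi = {n div 2}" unfolding Mi_def by auto
    moreover have "n - n div 2 = n div 2" using True by auto
    ultimately show ?thesis using True by (simp add: g_def)
  next
    case False
    then have "Mi = {}" unfolding Mi_def by auto
    then show ?thesis using False by simp
  qed
  finally show ?thesis by (simp add: add.commute add.left_commute)
qed

declare s2.simps[simp del]

lemma s2_even: "s2 (2*k) = s2 k"
  by (cases "k = 0") (simp_all add: s2.simps[of "2*k"] s2.simps[of 0])

lemma s2_0[simp]: "s2 0 = 0" by (simp add: s2.simps)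

lemma s2_odd: "s2 (2*k+1) = Suc (s2 k)" "s2 (Suc (2*k)) = Suc (s2 k)"
  by (subst s2.simps; simp)+

lemma tm_even: "tm (2*k) = tm k"
  by (simp add: tm_def s2_even)

lemma bit_of_nat_mod2: "(of_nat (n mod 2) :: bit) = (if even n then 0 else 1)"
  by (cases "even n") (auto simp: even_iff_mod_2_eq_zero odd_iff_mod_2_eq_one)

lemma tm_odd: "tm (2*k+1) = 1 + tm k"
  by (cases "even (s2 k)") (auto simp: tm_def s2_odd bit_of_nat_mod2)

lemma tm_0: "tm 0 = 0" by (simp add: tm_def)

lemma tm_1: "tm (Suc 0) = 1" using tm_odd[of 0] by (simp add: tm_0)

lemma F_nth: "F_tm $ n = tm n"
  by (simp add: F_tm_def tm_0)

lemma bit_one_one: "(1::bit) + 1 = 0" by simp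

lemma TM_eq:
  "F_tm + fps_X^2 * F_tm = F_tm*F_tm + fps_X * (F_tm*F_tm) + fps_X^2 * (F_tm*F_tm)
     + fps_X^3 * (F_tm*F_tm) + fps_X"
proof (rule fps_ext)
  fix n
  show "(F_tm + fps_X^2 * F_tm) $ n = (F_tm*F_tm + fps_X * (F_tm*F_tm) + fps_X^2 * (F_tm*F_tm)
     + fps_X^3 * (F_tm*F_tm) + fps_X) $ n"
  proof (cases "even n")
    case True
    then obtain k where n: "n = 2*k" by auto
    show ?thesis
    proof (cases k)
      case 0 then show ?thesis using n by (simp add: fps_X_power_mult_nth frob_nth F_nth tm_0)
    next
      case (Suc j)
      have "n - 2 = 2*j" "n - 1 = 2*j+1" using n Suc by auto
      moreover have "n < 3 \<or> odd (n - 3)" using n Suc by auto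
      moreover have "tm (Suc (Suc (2*j))) = tm (Suc j)" using tm_even[of "Suc j"] by simp
      moreover have "1 + tm (Suc (2*j)) = tm j" using tm_odd[of j] by (simp add: add.assoc[symmetric])
      ultimately show ?thesis using n Suc by (simp add: fps_X_power_mult_nth frob_nth F_nth tm_even)
    qed
  next
    case False
    then obtain k where n: "n = 2*k+1" by (metis oddE)
    show ?thesis
    proof (cases k)
      case 0 then show ?thesis using n by (simp add: fps_X_power_mult_nth frob_nth F_nth tm_0 tm_1)
    next
      case (Suc j)
      have "n - 2 = 2*j+1" "n - 1 = 2*(Suc j)" "n - 3 = 2*j" using n Suc by auto
      moreover have "tm (Suc (Suc (2*j))) = tm (Suc j)" using tm_even[of "Suc j"] by simp
      moreover have "tm (Suc (Suc (Suc (2*j)))) = 1 + tm (Suc j)" using tm_odd[of "Suc j"] by simp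
      moreover have "1 + tm (Suc (2*j)) = tm j" using tm_odd[of j] by (simp add: add.assoc[symmetric])
      ultimately show ?thesis using n Suc
        apply (simp add: fps_X_power_mult_nth frob_nth F_nth tm_even tm_odd)
        done
    qed
  qed
qed




fun inM :: "nat \<Rightarrow> bool" where
  "inM n = (if n = 0 then True else n mod 4 \<le> 1 \<and> inM (n div 4))"
declare inM.simps[simp del]

lemma inM_0[simp]: "inM 0" by (simp add: inM.simps)

lemma inM_iff: "inM n \<longleftrightarrow> n mod 4 \<le> 1 \<and> inM (n div 4)"
  by (cases "n = 0") (simp_all add: inM.simps[of n])

lemma divmod4: "(x::nat) = 4*q + r \<Longrightarrow> r < 4 \<Longrightarrow> x div 4 = q \<and> x mod 4 = r"
  by auto

lemma mod4_split: "(N::nat) mod 2 + 2*((N mod 4) div 2) = N mod 4"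
proof -
  have "N mod 2 = N mod 4 mod 2" by (simp add: mod_mod_cancel)
  moreover have "N mod 4 < 4" by simp
  ultimately show ?thesis by (cases "N mod 4"; cases "N mod 4 - 1"; cases "N mod 4 - 2"; auto)
qed

lemma key4:
  assumes "(a::nat) mod 4 \<le> 1" "b mod 4 \<le> 1" "a + 2*b = N"
  shows "a div 4 + 2*(b div 4) = N div 4 \<and> a mod 4 = (N mod 4) mod 2"
proof -
  have "b = 4*(b div 4) + b mod 4" "a = 4*(a div 4) + a mod 4" by simp_all
  then have "N = 4*(a div 4) + 8*(b div 4) + a mod 4 + 2*(b mod 4)"
    using assms(3) by linarith
  then have "N = 4*(a div 4 + 2*(b div 4)) + (a mod 4 + 2*(b mod 4))" by simp
  moreover have "a mod 4 + 2*(b mod 4) < 4" using assms by linarith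
  ultimately have "N div 4 = a div 4 + 2*(b div 4)" "N mod 4 = a mod 4 + 2*(b mod 4)"
    using divmod4 by blast+
  moreover have "a mod 4 = (a mod 4 + 2*(b mod 4)) mod 2" using assms(1) by auto
  ultimately show ?thesis by simp
qed

lemma decomp_ex: "\<exists>a b. inM a \<and> inM b \<and> a + 2*b = N"
proof (induction N rule: less_induct)
  case (less N)
  show ?case
  proof (cases "N = 0")
    case True then show ?thesis by (intro exI[of _ 0]) simp
  next
    case False
    then have "N div 4 < N" by simp
    with less obtain a b where ab: "inM a" "inM b" "a + 2*b = N div 4" by blast
    define a' where "a' = 4*a + N mod 2"
    define b' where "b' = 4*b + (N mod 4) div 2"
    have "a' div 4 = a \<and> a' mod 4 = N mod 2" by (rule divmod4) (auto simp: a'_def)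
    then have "inM a'" unfolding inM_iff[of a'] using ab by simp
    moreover have "b' div 4 = b \<and> b' mod 4 = (N mod 4) div 2" by (rule divmod4) (auto simp: b'_def)
    then have "inM b'" unfolding inM_iff[of b'] using ab by auto
    moreover have "a' + 2*b' = N"
    proof -
      have "a' + 2*b' = 4*a + 8*b + (N mod 2 + 2 * (N mod 4 div 2))" unfolding a'_def b'_def by simp
      also have "\<dots> = 4*a + 8*b + N mod 4" using mod4_split[of N] by simp
      also have "4*a + 8*b = 4*(N div 4)" using ab(3) by linarith
      finally show ?thesis by simp
    qed
    ultimately show ?thesis by blast
  qed
qed

lemma decomp_uniq:
  "inM a \<Longrightarrow> inM b \<Longrightarrow> a + 2*b = N \<Longrightarrow> inM a' \<Longrightarrow> inM b' \<Longrightarrow> a' + 2*b' = N \<Longrightarrow> a = a'"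
proof (induction N arbitrary: a b a' b' rule: less_induct)
  case (less N)
  show ?case
  proof (cases "N = 0")
    case True then show ?thesis using less.prems by simp
  next
    case False
    then have lt: "N div 4 < N" by simp
    have m: "a mod 4 \<le> 1" "b mod 4 \<le> 1" "a' mod 4 \<le> 1" "b' mod 4 \<le> 1"
      "inM (a div 4)" "inM (b div 4)" "inM (a' div 4)" "inM (b' div 4)"
      using less.prems inM_iff by blast+
    have e1: "a div 4 + 2 * (b div 4) = N div 4" "a mod 4 = N mod 4 mod 2"
      using key4[OF m(1,2) less.prems(3)] by blast+
    have e2: "a' div 4 + 2 * (b' div 4) = N div 4" "a' mod 4 = N mod 4 mod 2"
      using key4[OF m(3,4) less.prems(6)] by blast+
    have "a div 4 = a' div 4" using less.IH[OF lt m(5,6) e1(1) m(7,8) e2(1)] .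
    then show ?thesis using e1(2) e2(2) div_mult_mod_eq[of a 4] div_mult_mod_eq[of a' 4] by linarith
  qed
qed




definition Qf :: "bit fps" where "Qf = Abs_fps (\<lambda>n. of_bool (8 dvd n \<and> inM (n div 8)))"
definition Q16 :: "bit fps" where "Q16 = Abs_fps (\<lambda>n. of_bool (16 dvd n \<and> inM (n div 16)))"

lemma Q_sq: "Qf * Qf = Q16"
proof (rule fps_ext)
  fix n
  show "(Qf*Qf)$n = Q16$n"
  proof (cases "even n")
    case True
    then obtain k where n: "n = 2*k" by auto
    have "8 dvd k \<longleftrightarrow> 16 dvd 2*k" by presburger
    moreover have "2*k div 16 = k div 8" by simp
    ultimately show ?thesis unfolding frob_nth using n by (simp add: Qf_def Q16_def)
  next
    case False
    then have "\<not> 16 dvd n" by presburger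
    then show ?thesis unfolding frob_nth using False by (simp add: Q16_def)
  qed
qed

lemma QQ16_nth: "(Qf * Q16) $ n = of_bool (8 dvd n)"
proof -
  define C where "C i \<longleftrightarrow> (8 dvd i \<and> inM (i div 8)) \<and> (16 dvd (n - i) \<and> inM ((n - i) div 16))" for i
  have "(Qf * Q16) $ n = (\<Sum>i=0..n. of_bool (C i))"
    unfolding fps_mult_nth by (simp add: Qf_def Q16_def C_def flip: of_bool_conj)
  also have "\<dots> = of_nat (card ({0..n} \<inter> {i. C i}))" by simp
  also have "{0..n} \<inter> {i. C i} = (if 8 dvd n then {8 * (SOME a. \<exists>b. inM a \<and> inM b \<and> a + 2*b = n div 8)} else {})"
  proof (cases "8 dvd n")
    case True
    define a where "a = (SOME a. \<exists>b. inM a \<and> inM b \<and> a + 2*b = n div 8)"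
    obtain b where ab: "inM a" "inM b" "a + 2*b = n div 8"
      unfolding a_def using someI_ex[OF decomp_ex[of "n div 8"]] by blast
    have "{0..n} \<inter> {i. C i} = {8*a}"
    proof (rule set_eqI, rule iffI)
      fix i assume "i \<in> {0..n} \<inter> {i. C i}"
      then have i: "i \<le> n" "8 dvd i" "inM (i div 8)" "16 dvd (n-i)" "inM ((n-i) div 16)"
        unfolding C_def by auto
      have "i div 8 + 2 * ((n-i) div 16) = n div 8" using i True by auto
      then have "i div 8 = a" using decomp_uniq[OF i(3) i(5) _ ab(1,2,3)] by blast
      then show "i \<in> {8*a}" using i by auto
    next
      fix i assume "i \<in> {8*a}"
      then have i: "i = 8*a" by simp
      have n: "n = 8*a + 16*b" using ab(3) True by auto
      show "i \<in> {0..n} \<inter> {i. C i}" unfolding C_def i using ab n by simp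
    qed
    then show ?thesis using True a_def by simp
  next
    case False
    have "\<not> C i" if "i \<le> n" for i
    proof
      assume "C i"
      then have "8 dvd i" "8 dvd (n - i)" unfolding C_def by (auto intro: dvd_trans[of 8 16])
      then have "8 dvd (i + (n - i))" by simp
      then show False using False that by simp
    qed
    then show ?thesis using False by auto
  qed
  finally show ?thesis by (cases "8 dvd n") auto
qed

lemma W_eq: "(1 + fps_X^8) * (Qf * Q16) = 1"
proof (rule fps_ext)
  fix n
  show "((1 + fps_X^8) * (Qf * Q16)) $ n = (1::bit fps) $ n"
  proof (cases "n < 8")
    case True
    then show ?thesis by (auto simp: distrib_right fps_X_power_mult_nth QQ16_nth)
  next
    case False
    then have "8 dvd (n - 8) \<longleftrightarrow> 8 dvd n" by presburger
    then show ?thesis using False by (simp add: distrib_right fps_X_power_mult_nth QQ16_nth)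
  qed
qed




definition hset :: "nat \<Rightarrow> bool" where
  "hset m \<longleftrightarrow> m = 1 \<or> m = 2 \<or> (\<exists>s. inM s \<and> 1 \<le> s \<and> 8*s \<le> m+1 \<and> m \<le> 8*s+2)"

definition Hf :: "bit fps" where "Hf = Abs_fps (\<lambda>m. of_bool (hset m))"

lemma Xq: assumes "i \<le> 3"
  shows "(fps_X^i * Qf)$n = of_bool (i \<le> n \<and> n mod 8 = i \<and> inM (n div 8))"
proof (cases "i \<le> n")
  case True
  have e: "n = 8 * (n div 8) + n mod 8" by simp
  have "8 dvd (n - i) \<longleftrightarrow> n mod 8 = i"
  proof
    assume "8 dvd (n - i)"
    then obtain k where "n - i = 8*k" by auto
    then have "n = 8*k + i" using True by simp
    then show "n mod 8 = i" using assms by simp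
  next
    assume "n mod 8 = i"
    then have "n - i = 8 * (n div 8)" using e by linarith
    then show "8 dvd (n - i)" by simp
  qed
  moreover have "n mod 8 = i \<Longrightarrow> (n - i) div 8 = n div 8"
  proof -
    assume "n mod 8 = i"
    then have "n - i = 8 * (n div 8)" using e by linarith
    then show ?thesis by simp
  qed
  ultimately show ?thesis using True by (auto simp: fps_X_power_mult_nth Qf_def)
qed (simp add: fps_X_power_mult_nth)

lemma hset_small: "m < 7 \<Longrightarrow> hset m \<longleftrightarrow> m = 1 \<or> m = 2"
  unfolding hset_def by auto

lemma hset_big: assumes "8 \<le> n" shows "hset (n - 1) \<longleftrightarrow> n mod 8 \<le> 3 \<and> inM (n div 8)"
proof
  assume "hset (n - 1)"
  then obtain s where s: "inM s" "8*s \<le> n" "n \<le> 8*s+3" using assms unfolding hset_def by auto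
  define t where "t = n - 8*s"
  have nt: "n = 8*s + t" "t \<le> 3" using s unfolding t_def by auto
  then have "n div 8 = s" "n mod 8 = t" by simp_all
  then show "n mod 8 \<le> 3 \<and> inM (n div 8)" using s nt by simp
next
  assume a: "n mod 8 \<le> 3 \<and> inM (n div 8)"
  have e: "n = 8 * (n div 8) + n mod 8" by simp
  have "1 \<le> n div 8" using assms by simp
  then show "hset (n - 1)" unfolding hset_def using assms a e
    by (intro disjI2 exI[of _ "n div 8"]) linarith
qed

lemma XH: "fps_X * Hf = Qf + fps_X^1*Qf + fps_X^2*Qf + fps_X^3*Qf + 1 + fps_X"
proof (rule fps_ext)
  fix n
  have X1: "(fps_X :: bit fps) $ n = of_bool (n = 1)" by (simp add: fps_X_def)
  have R: "(Qf + fps_X^1*Qf + fps_X^2*Qf + fps_X^3*Qf + 1 + fps_X) $ n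
    = of_bool (n mod 8 = 0 \<and> inM (n div 8))
      + of_bool (1 \<le> n \<and> n mod 8 = 1 \<and> inM (n div 8))
      + of_bool (2 \<le> n \<and> n mod 8 = 2 \<and> inM (n div 8))
      + of_bool (3 \<le> n \<and> n mod 8 = 3 \<and> inM (n div 8)) + of_bool (n = 0) + of_bool (n = 1)"
    using Xq[of 0 n] Xq[of 1 n] Xq[of 2 n] Xq[of 3 n] X1 by simp
  show "(fps_X * Hf) $ n = (Qf + fps_X^1*Qf + fps_X^2*Qf + fps_X^3*Qf + 1 + fps_X) $ n"
    unfolding R
  proof (cases "n < 8")
    case True
    then have "n div 8 = 0" "n mod 8 = n" by auto
    moreover have "n \<noteq> 0 \<Longrightarrow> hset (n - 1) \<longleftrightarrow> n = 2 \<or> n = 3" using hset_small[of "n-1"] True by auto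
    ultimately show "(fps_X * Hf) $ n = of_bool (n mod 8 = 0 \<and> inM (n div 8))
      + of_bool (1 \<le> n \<and> n mod 8 = 1 \<and> inM (n div 8))
      + of_bool (2 \<le> n \<and> n mod 8 = 2 \<and> inM (n div 8))
      + of_bool (3 \<le> n \<and> n mod 8 = 3 \<and> inM (n div 8)) + of_bool (n = 0) + of_bool (n = 1)"
      using True by (cases n) (auto simp: Hf_def)
  next
    case False
    then have h: "(fps_X * Hf) $ n = of_bool (n mod 8 \<le> 3 \<and> inM (n div 8))"
      using hset_big[of n] by (simp add: Hf_def)
    have "n mod 8 \<le> 3 \<longleftrightarrow> n mod 8 = 0 \<or> n mod 8 = 1 \<or> n mod 8 = 2 \<or> n mod 8 = 3" by auto
    then show "(fps_X * Hf) $ n = of_bool (n mod 8 = 0 \<and> inM (n div 8))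
      + of_bool (1 \<le> n \<and> n mod 8 = 1 \<and> inM (n div 8))
      + of_bool (2 \<le> n \<and> n mod 8 = 2 \<and> inM (n div 8))
      + of_bool (3 \<le> n \<and> n mod 8 = 3 \<and> inM (n div 8)) + of_bool (n = 0) + of_bool (n = 1)"
      unfolding h using False by (cases "inM (n div 8)"; auto)
  qed
qed




lemma two_fps_bit: "(2::bit fps) = 0"
  by (rule fps_ext) (simp add: numeral_fps_const)

lemma bf_add_self[simp]: "(x::bit fps) + x = 0"
  by (metis mult_2 two_fps_bit mult_zero_left)

lemma bf_num0[simp]: "(numeral (num.Bit0 k) :: bit fps) = 0"
  by (simp add: numeral_Bit0)
lemma bf_num1[simp]: "(numeral (num.Bit1 k) :: bit fps) = 1"
  by (simp add: numeral_Bit1)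


lemma eq_of_sum0: "(a::bit fps) + b = 0 \<Longrightarrow> a = b"
  by (metis add.assoc add.right_neutral bf_add_self)

lemma p_cube: "(1 + fps_X + fps_X^2 + fps_X^3 :: bit fps)^3 = (1 + fps_X) * (1 + fps_X^8)"
  by (simp add: algebra_simps eval_nat_numeral)

lemma EX: "(1 + Hf*Hf) * fps_X = (1 + Hf*Hf) * (1 + Hf) * (fps_X * fps_X) + Hf"
proof -
  define X :: "bit fps" where "X = fps_X"
  define p where "p = 1 + X + X^2 + X^3"
  define w where "w = p * Qf"
  define u where "u = X * Hf"
  have hu: "u = w + 1 + X"
    using XH unfolding u_def w_def p_def X_def by (simp add: algebra_simps)
  have h2: "(1 + X^8) * (Qf * (Qf * Qf)) = 1" using W_eq Q_sq unfolding X_def by simp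
  have hw: "w^3 = 1 + X"
  proof -
    have "w^3 = p^3 * (Qf * (Qf * Qf))" unfolding w_def by (simp add: power3_eq_cube algebra_simps)
    also have "p^3 = (1 + X) * (1 + X^8)" unfolding p_def X_def by (rule p_cube)
    finally show ?thesis using h2 by (simp add: mult.assoc)
  qed
  have s1: "(X^2 + u^2) + ((X^2 + u^2)*(X + u) + u) = w^3 + 1 + X"
    unfolding hu by (simp add: algebra_simps power3_eq_cube power2_eq_square)
  have G: "X^2 + u^2 = (X^2 + u^2)*(X + u) + u"
    by (rule eq_of_sum0) (simp add: s1 hw)
  have l: "X^3 * ((1 + Hf*Hf) * X) = X^2 * (X^2 + u^2)"
    unfolding u_def by (simp add: algebra_simps power3_eq_cube power2_eq_square)
  have r: "X^3 * ((1 + Hf*Hf) * (1 + Hf) * (X * X) + Hf) = X^2 * ((X^2 + u^2)*(X + u) + u)"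
    unfolding u_def by (simp add: algebra_simps power3_eq_cube power2_eq_square)
  have "X^3 * ((1 + Hf*Hf) * X) = X^3 * ((1 + Hf*Hf) * (1 + Hf) * (X * X) + Hf)"
    using l r G by simp
  moreover have "X^3 \<noteq> 0" unfolding X_def by simp
  ultimately show ?thesis unfolding X_def by simp
qed




lemma H0: "Hf $ 0 = 0" by (simp add: Hf_def hset_def)
lemma F0: "F_tm $ 0 = 0" by (simp add: F_tm_def)
lemma F1: "F_tm $ 1 \<noteq> 0" by (simp add: F_nth tm_1)

lemma T_eq2: "(1 + fps_X*fps_X) * F_tm = (1 + fps_X*fps_X) * (1 + fps_X) * (F_tm*F_tm) + fps_X"
  using TM_eq by (simp add: algebra_simps power2_eq_square power3_eq_cube)

lemma Y_eq: "(1 + Hf*Hf) * (F_tm oo Hf) = (1 + Hf*Hf) * (1 + Hf) * ((F_tm oo Hf)*(F_tm oo Hf)) + Hf"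
proof -
  have "((1 + fps_X*fps_X) * F_tm) oo Hf = ((1 + fps_X*fps_X) * (1 + fps_X) * (F_tm*F_tm) + fps_X) oo Hf"
    using T_eq2 by simp
  then show ?thesis
    by (simp add: fps_compose_add_distrib fps_compose_mult_distrib[OF H0] fps_X_fps_compose_startby0[OF H0])
qed

lemma FH: "F_tm oo Hf = fps_X"
proof -
  define Y where "Y = F_tm oo Hf"
  define D where "D = Y + fps_X"
  have Ye: "(1 + Hf*Hf) * Y = (1 + Hf*Hf) * (1 + Hf) * (Y*Y) + Hf" using Y_eq Y_def by simp
  have "(1 + Hf*Hf) * D = (1 + Hf*Hf) * ((1 + Hf) * (D*D))"
  proof -
    have "(1 + Hf*Hf) * D + (1 + Hf*Hf) * ((1 + Hf) * (D*D))
      = ((1 + Hf*Hf) * Y + ((1 + Hf*Hf) * (1 + Hf) * (Y*Y) + Hf))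
        + ((1 + Hf*Hf) * fps_X + ((1 + Hf*Hf) * (1 + Hf) * (fps_X*fps_X) + Hf))"
      unfolding D_def by (simp add: algebra_simps)
    also have "\<dots> = 0" using Ye EX by simp
    finally show ?thesis by (rule eq_of_sum0)
  qed
  moreover have "(1 + Hf*Hf) \<noteq> 0"
  proof
    assume "1 + Hf*Hf = 0"
    then have "(1 + Hf*Hf) $ 0 = 0" by simp
    then show False using H0 by simp
  qed
  ultimately have Dq: "D = (1 + Hf) * (D*D)" by simp
  have "D * (1 + (1 + Hf) * D) = 0"
  proof -
    have "D * (1 + (1 + Hf) * D) = D + (1 + Hf) * (D*D)" by (simp add: algebra_simps)
    also have "\<dots> = 0" by (simp only: Dq[symmetric] bf_add_self)
    finally show ?thesis .
  qed
  moreover have "(1 + (1 + Hf) * D) \<noteq> 0"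
  proof
    assume "1 + (1 + Hf) * D = 0"
    then have "(1 + (1 + Hf) * D) $ 0 = 0" by simp
    moreover have "D $ 0 = 0" unfolding D_def Y_def using F0 by simp
    ultimately show False by simp
  qed
  ultimately have "D = 0" by simp
  then show ?thesis unfolding D_def Y_def by (simp add: eq_of_sum0)
qed

lemma G_eq: "G_tm = Hf"
proof -
  have "fps_inv F_tm oo (F_tm oo Hf) = (fps_inv F_tm oo F_tm) oo Hf"
    by (rule fps_compose_assoc[OF H0 F0])
  then show ?thesis unfolding G_tm_def FH fps_inv[OF F0 F1]
    by (simp add: fps_X_fps_compose_startby0[OF H0])
qed

lemma c_eq: "c_tm n = of_bool (hset n)"
  by (simp add: c_tm_def G_eq Hf_def)




lemma enum_char:
  fixes S :: "nat set"
  assumes inf: "infinite S" and x: "x \<in> S" and c: "card {y\<in>S. y < x} = n"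
  shows "enumerate S n = x"
proof -
  obtain k where k: "enumerate S k = x" using enumerate_Ex[OF inf x] by blast
  have "{y\<in>S. y < x} = enumerate S ` {..<k}"
  proof (rule set_eqI, rule iffI)
    fix y assume "y \<in> {y\<in>S. y < x}"
    then have "y \<in> S" "y < x" by auto
    then obtain i where i: "enumerate S i = y" using enumerate_Ex[OF inf] by blast
    then have "i < k" using \<open>y < x\<close> k inf by auto
    then show "y \<in> enumerate S ` {..<k}" using i by auto
  next
    fix y assume "y \<in> enumerate S ` {..<k}"
    then obtain i where "i < k" "y = enumerate S i" by auto
    then show "y \<in> {y\<in>S. y < x}" using k inf enumerate_in_set[OF inf] by auto
  qed
  then have "card {y\<in>S. y < x} = k"
    using card_image[OF inj_on_subset[OF inj_enumerate[OF inf]]] by simp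
  then show ?thesis using c k by simp
qed

definition B :: "nat \<Rightarrow> bool" where "B j \<longleftrightarrow> even j \<and> inM (j div 2)"

lemma hset_B: assumes "1 \<le> m" shows "hset m \<longleftrightarrow> B ((m+1) div 4)"
proof -
  define k where "k = m + 1"
  define q where "q = k div 8"
  define r where "r = k mod 8"
  have kqr: "k = 8*q + r" "r < 8" unfolding q_def r_def by simp_all
  have j: "(m+1) div 4 = 2*q + r div 4" unfolding k_def[symmetric] using kqr by simp
  have rd: "r div 4 = 0 \<longleftrightarrow> r < 4" by auto
  have rd1: "r div 4 \<le> 1" using kqr by simp
  have Bj: "B ((m+1) div 4) \<longleftrightarrow> r < 4 \<and> inM q"
  proof (cases "r < 4")
    case True then show ?thesis unfolding B_def j by simp
  next
    case False then have "r div 4 = 1" using rd rd1 by linarith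
    then show ?thesis unfolding B_def j using False by simp
  qed
  have hs: "hset m \<longleftrightarrow> k = 2 \<or> k = 3 \<or> (\<exists>s. inM s \<and> 1 \<le> s \<and> 8*s \<le> k \<and> k \<le> 8*s+3)"
    unfolding hset_def k_def using assms by auto
  show ?thesis
  proof (cases "q = 0")
    case True
    then have "\<not> (\<exists>s. inM s \<and> 1 \<le> s \<and> 8*s \<le> k \<and> k \<le> 8*s+3)" using kqr by auto
    moreover have "k \<ge> 2" using assms k_def by simp
    moreover have "k = r" using True kqr by simp
    ultimately have r2: "r \<ge> 2" "k = r" by simp_all
    have "(k = 2 \<or> k = 3) \<longleftrightarrow> r < 4" unfolding r2(2) using r2(1) by presburger
    then have "(k = 2 \<or> k = 3) \<longleftrightarrow> r < 4 \<and> inM q" using True by simp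
    then show ?thesis unfolding hs Bj using \<open>\<not> (\<exists>s. inM s \<and> 1 \<le> s \<and> 8*s \<le> k \<and> k \<le> 8*s+3)\<close> by blast
  next
    case False
    have "(\<exists>s. inM s \<and> 1 \<le> s \<and> 8*s \<le> k \<and> k \<le> 8*s+3) \<longleftrightarrow> r < 4 \<and> inM q"
    proof
      assume "\<exists>s. inM s \<and> 1 \<le> s \<and> 8*s \<le> k \<and> k \<le> 8*s+3"
      then obtain s where s: "inM s" "8*s \<le> k" "k \<le> 8*s+3" by blast
      have "q \<le> s"
      proof (rule ccontr)
        assume "\<not> q \<le> s" then have "s + 1 \<le> q" by simp
        then show False using kqr s by linarith
      qed
      moreover have "s \<le> q"
      proof (rule ccontr)
        assume "\<not> s \<le> q" then have "q + 1 \<le> s" by simp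
        then show False using kqr s by linarith
      qed
      ultimately have "s = q" by simp
      then have "s = q" "r < 4" using kqr s by linarith+
      then show "r < 4 \<and> inM q" using s by simp
    next
      assume "r < 4 \<and> inM q"
      then show "\<exists>s. inM s \<and> 1 \<le> s \<and> 8*s \<le> k \<and> k \<le> 8*s+3"
        using kqr False by (intro exI[of _ q]) auto
    qed
    moreover have "k \<noteq> 2" "k \<noteq> 3" using kqr False by auto
    ultimately show ?thesis unfolding hs Bj by auto
  qed
qed

lemma Z_char: "{m. m \<ge> 1 \<and> c_tm m = 0} = {m. 1 \<le> m \<and> \<not> B ((m+1) div 4)}"
  using hset_B by (auto simp: c_eq)

lemma sum_div4: "(\<Sum>w<4*(e::nat). f (w div 4)) = (4::nat) * (\<Sum>j<e. f j)"
proof (induction e)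
  case 0 then show ?case by simp
next
  case (Suc e)
  have e: "4 * Suc e = Suc (Suc (Suc (Suc (4*e))))" by simp
  have d: "(4*e) div 4 = e" "Suc (4*e) div 4 = e" "Suc (Suc (4*e)) div 4 = e" "Suc (Suc (Suc (4*e))) div 4 = e"
    by simp_all
  have "(\<Sum>w<4*Suc e. f (w div 4)) = (\<Sum>w<4*e. f (w div 4)) + f e + f e + f e + f e"
    unfolding e by (simp only: sum.lessThan_Suc d)
  then show ?case using Suc by simp
qed

lemma card_sum: "card {w. w < (N::nat) \<and> Q w} = (\<Sum>w<N. of_bool (Q w) :: nat)"
proof (induction N)
  case 0 then show ?case by simp
next
  case (Suc N)
  show ?case
  proof (cases "Q N")
    case True
    then have "{w. w < Suc N \<and> Q w} = insert N {w. w < N \<and> Q w}" by auto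
    then show ?thesis using Suc True by simp
  next
    case False
    then have "{w. w < Suc N \<and> Q w} = {w. w < N \<and> Q w}" using less_Suc_eq by auto
    then show ?thesis using Suc False by simp
  qed
qed

lemma card_div4: "card {w. w < 4*(e::nat) \<and> P (w div 4)} = 4 * card {j. j < e \<and> P j}"
  unfolding card_sum by (rule sum_div4)

lemma inM_bound: "inM s \<Longrightarrow> s < 4^m \<Longrightarrow> 2*s < 4^m"
proof (induction m arbitrary: s)
  case 0 then show ?case by simp
next
  case (Suc m)
  have "s div 4 < 4^m" using Suc.prems(2) by (simp add: less_mult_imp_div_less mult.commute)
  moreover have "inM (s div 4)" "s mod 4 \<le> 1" using Suc.prems(1) inM_iff by blast+
  ultimately have "2 * (s div 4) < 4^m" using Suc.IH by blast
  moreover have e: "s = 4 * (s div 4) + s mod 4" by simp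
  moreover have "(4::nat)^Suc m = 4 * 4^m" by simp
  ultimately show ?case using \<open>s mod 4 \<le> 1\<close> by linarith
qed

lemma cardM: "card {s. inM s \<and> s < 4^m} = 2^m"
proof (induction m)
  case 0
  have "{s. inM s \<and> s < 4^0} = {0}" by auto
  then show ?case by simp
next
  case (Suc m)
  define A where "A = {s. inM s \<and> s < 4^m}"
  have fA: "finite A" unfolding A_def by simp
  have eq: "{s. inM s \<and> s < 4^Suc m} = (\<lambda>t. 4*t) ` A \<union> (\<lambda>t. 4*t+1) ` A"
  proof (rule set_eqI, rule iffI)
    fix s assume "s \<in> {s. inM s \<and> s < 4^Suc m}"
    then have s: "inM s" "s < 4 * 4^m" by auto
    have "s div 4 < 4^m" using s(2) by (simp add: less_mult_imp_div_less mult.commute)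
    moreover have "inM (s div 4)" "s mod 4 \<le> 1" using s(1) inM_iff by blast+
    moreover have e: "s = 4 * (s div 4) + s mod 4" by simp
    moreover have "s mod 4 = 0 \<or> s mod 4 = 1" using \<open>s mod 4 \<le> 1\<close> by auto
    then have "s = 4 * (s div 4) \<or> s = 4 * (s div 4) + 1" using e by linarith
    ultimately have "s div 4 \<in> A" "s = 4 * (s div 4) \<or> s = 4 * (s div 4) + 1"
      unfolding A_def by auto
    then show "s \<in> (\<lambda>t. 4*t) ` A \<union> (\<lambda>t. 4*t+1) ` A" by auto
  next
    fix s assume "s \<in> (\<lambda>t. 4*t) ` A \<union> (\<lambda>t. 4*t+1) ` A"
    then obtain t r where tr: "t \<in> A" "r \<le> 1" "s = 4*t + r"
    proof (rule UnE)
      assume "s \<in> (\<lambda>t. 4*t) ` A" then obtain t where "t \<in> A" "s = 4*t + 0" by auto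
      then show thesis using that[of t 0] by simp
    next
      assume "s \<in> (\<lambda>t. 4*t+1) ` A" then obtain t where "t \<in> A" "s = 4*t + 1" by auto
      then show thesis using that[of t 1] by simp
    qed
    then have "s div 4 = t \<and> s mod 4 = r" by (intro divmod4) auto
    then have "inM s" using tr inM_iff[of s] unfolding A_def by auto
    moreover have "s < 4^Suc m" using tr unfolding A_def by auto
    ultimately show "s \<in> {s. inM s \<and> s < 4^Suc m}" by simp
  qed
  have "card ((\<lambda>t. 4*t) ` A \<union> (\<lambda>t. 4*t+1) ` A) = card ((\<lambda>t. 4*t) ` A) + card ((\<lambda>t. 4*t+1) ` A)"
  proof (rule card_Un_disjoint)
    show "(\<lambda>t. 4*t) ` A \<inter> (\<lambda>t. 4*t+1) ` A = {}"
    proof (rule ccontr)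
      assume "(\<lambda>t. 4*t) ` A \<inter> (\<lambda>t. 4*t+1) ` A \<noteq> {}"
      then obtain t t' where "4*t = 4*t'+(1::nat)" by auto
      then have "(4*t) mod 4 = (4*t'+1) mod (4::nat)" by simp
      then show False by simp
    qed
  qed (use fA in auto)
  also have "\<dots> = card A + card A"
    by (subst card_image, simp add: inj_on_def)+ simp
  finally show ?case using eq Suc.IH A_def by simp
qed




lemma card_split: "card {j. j < (e::nat) \<and> P j} + card {j. j < e \<and> \<not> P j} = e"
proof -
  have "(\<Sum>x<e. of_bool (P x) + of_bool (\<not> P x) :: nat) = (\<Sum>x<e. 1)" by (rule sum.cong) auto
  then show ?thesis unfolding card_sum sum.distrib[symmetric] by simp
qed

theorem mainTheorem12:
  fixes m n :: nat
  assumes "m \<ge> 2"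
    and "2 ^ (2*m) \<le> n"
    and "real n \<le> 4/3 * 2 ^ (2*m)"
  shows "z_tm n = 0"
proof -
  define P :: nat where "P = 2^m"
  have P4: "P \<ge> 4" unfolding P_def using power_increasing[OF assms(1), of "2::nat"] by simp
  have pm: "(2::nat)^(2*m) = P*P" unfolding P_def mult_2 power_add ..
  have n1: "P*P \<le> n" using assms(2) pm by simp
  have r1: "real (2^(2*m)) = (2::real)^(2*m)" by simp
  have "real n \<le> 4/3 * real (P*P)" using assms(3) unfolding r1[symmetric] pm .
  then have "3 * real n \<le> 4 * real (P*P)" by simp
  then have "real (3*n) \<le> real (4*(P*P))" by simp
  then have n2: "3*n \<le> 4*(P*P)" by (simp only: of_nat_le_iff)
  define e where "e = n + P"
  have e1: "P*P \<le> e" using n1 e_def by simp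
  have "4*P \<le> P*P" using P4 by simp
  then have e2: "e < 2*(P*P)" using n2 e_def P4 by linarith
  define Z where "Z = {y. 1 \<le> y \<and> \<not> B ((y+1) div 4)}"
  have Zc: "{m. m \<ge> 1 \<and> c_tm m = 0} = Z" unfolding Z_def by (rule Z_char)
  have notB: "\<not> B e"
  proof
    assume "B e"
    then have ev: "even e" "inM (e div 2)" unfolding B_def by auto
    have "e div 2 < P*P" using e2 by simp
    then have "2 * (e div 2) < P*P" using inM_bound[OF ev(2), of m] pm by (simp add: P_def power_mult power2_eq_square flip: power_mult_distrib)
    then show False using ev(1) e1 by simp
  qed
  define x where "x = 4*e - 1"
  have "e \<ge> 1" using e_def P4 by simp
  then have x4: "(x + 1) div 4 = e" "x + 1 = 4*e" unfolding x_def by auto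
  have inf: "infinite Z"
    unfolding infinite_nat_iff_unbounded_le
  proof
    fix k :: nat
    have "((8*k+3) + 1) div 4 = 2*k+1" by simp
    then have "8*k+3 \<in> Z" unfolding Z_def B_def by simp
    then show "\<exists>y\<ge>k. y \<in> Z" by (intro exI[of _ "8*k+3"]) auto
  qed
  have "x \<ge> 1" using x4(2) \<open>e \<ge> 1\<close> by linarith
  then have xZ: "x \<in> Z" unfolding Z_def using x4 notB by auto
  have cB: "card {j. j < e \<and> B j} = P"
  proof -
    have "{j. j < e \<and> B j} = (\<lambda>s. 2*s) ` {s. inM s \<and> s < 4^m}"
    proof (rule set_eqI, rule iffI)
      fix j assume "j \<in> {j. j < e \<and> B j}"
      then have j: "j < e" "even j" "inM (j div 2)" unfolding B_def by auto
      have "j div 2 < 4^m" using j(1) e2 pm by (simp add: P_def power_mult flip: power_mult_distrib)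
      then show "j \<in> (\<lambda>s. 2*s) ` {s. inM s \<and> s < 4^m}" using j by (intro image_eqI[of _ _ "j div 2"]) auto
    next
      fix j assume "j \<in> (\<lambda>s. 2*s) ` {s. inM s \<and> s < 4^m}"
      then obtain s where s: "j = 2*s" "inM s" "s < 4^m" by auto
      have "2*s < 4^m" using inM_bound[OF s(2,3)] .
      moreover have "(4::nat)^m = P*P" using pm by (simp add: power_mult)
      ultimately show "j \<in> {j. j < e \<and> B j}" using s e1 unfolding B_def by auto
    qed
    moreover have "inj_on (\<lambda>s. 2*s) {s. inM s \<and> s < 4^m}" by (simp add: inj_on_def)
    ultimately show ?thesis using cardM[of m] card_image P_def by metis
  qed
  have cnB: "card {j. j < e \<and> \<not> B j} = n" using card_split[of e B] cB e_def by simp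
  have cZ: "card {y\<in>Z. y < x} = 4*n"
  proof -
    have "Suc ` {y\<in>Z. y < x} = {w. w < 4*e \<and> \<not> B (w div 4)}"
    proof (rule set_eqI, rule iffI)
      fix w assume "w \<in> Suc ` {y\<in>Z. y < x}"
      then obtain y where "y \<in> Z" "y < x" "w = Suc y" by auto
      then show "w \<in> {w. w < 4*e \<and> \<not> B (w div 4)}" using x4 unfolding Z_def by auto
    next
      fix w assume w: "w \<in> {w. w < 4*e \<and> \<not> B (w div 4)}"
      have "w div 4 \<noteq> 0"
      proof
        assume "w div 4 = 0"
        moreover have "B 0" by (simp add: B_def)
        ultimately show False using w by simp
      qed
      then have "w \<ge> 4" by simp
      then have "w = Suc (w - 1)" by simp
      moreover have "w - 1 \<in> {y\<in>Z. y < x}" using w \<open>w \<ge> 4\<close> x4 unfolding Z_def by auto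
      ultimately show "w \<in> Suc ` {y\<in>Z. y < x}" by blast
    qed
    then have "card {y\<in>Z. y < x} = card {w. w < 4*e \<and> \<not> B (w div 4)}"
      using card_image[of Suc "{y\<in>Z. y < x}"] by simp
    also have "\<dots> = 4 * card {j. j < e \<and> \<not> B j}" by (rule card_div4)
    finally show ?thesis using cnB by simp
  qed
  have d: "d_tm (4*n) = x" unfolding d_tm_def Zc using enum_char[OF inf xZ cZ] .
  have "z_tm n = (int e - int n) mod 2" unfolding z_tm_def d x4 by simp
  also have "int e - int n = int P" using e_def by simp
  also have "even P" unfolding P_def using assms(1) by simp
  then have "int P mod 2 = 0" by presburger
  finally show ?thesis .
qed



end
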